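(* Assume $\mathcal I=\emptyset$. If the maximal isotropic subspace $\mathcal M$ is strictly positive, then the smallest eigenvalue $\lambda\leq0$ of $-\Delta(\mathcal M)$ is simple.
   Context: Let $\mathcal G$ be a finite connected graph with no internal edges and a finite set $\mathcal E$ of external edges (half-lines $I_e=[0,\infty)$). $\mathcal H=\bigoplus_{e\in\mathcal E}L^2([0,\infty))$; $\mathcal D$ = $\psi\in\mathcal H$ with $\psi_e,\psi_e'$ absolutely continuous, $\psi_e''\in L^2$. $\mathcal K=\mathbb C^{|\mathcal E|}$, ${}^d\mathcal K=\mathcal K\oplus\mathcal K$. Maximal isotropic subspaces of ${}^d\mathcal K$ are $\mathcal M(A,B)=\{\chi_1\oplus\chi_2:A\chi_1+B\chi_2=0\}$ with $(A,B)$ of rank $|\mathcal E|$ and $AB^\dagger$ self-adjoint; $\Delta(\mathcal M)$ is the self-adjoint operator $(\Delta\psi)_e=\psi_e''$ on $\{\psi\in\mathcal D:A\underline\psi+B\underline\psi'=0\}$ where $\underline\psi=\{\psi_e(0)\}_e$, $\underline\psi'=\{\psi_e'(0)\}_e$. $\mathfrak S(\mathsf k;\mathcal M)=-(A+i\mathsf kB)^{-1}(A-i\mathsf kB)$. $\mathcal M$ is strictly positive if there is $\varkappa_0\geq0$ such that all entries of $\mathbb I+\mathfrak S(i\varkappa;\mathcal M)$ are positive for all $\varkappa\ge\varkappa_0$. *)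

theory Defs
  imports "HOL-Analysis.Analysis" "HOL-Library.Function_Algebras"
begin

text \<open>Star graph with no internal edges: edges indexed by a finite type 'e,
  each edge is the half-line [0,oo). A function on the graph is
  psi :: 'e \<Rightarrow> real \<Rightarrow> complex, with the convention psi e x = 0 for x < 0.\<close>

definition cmat_adj :: "complex^'n^'m \<Rightarrow> complex^'m^'n" where
  "cmat_adj M = (\<chi> i j. cnj (M $ j $ i))"

definition cmat_scale :: "complex \<Rightarrow> complex^'n^'m \<Rightarrow> complex^'n^'m" where
  "cmat_scale c M = (\<chi> i j. c * M $ i $ j)"

definition AB_block :: "complex^'e^'e \<Rightarrow> complex^'e^'e \<Rightarrow> complex^('e + 'e)^'e" where
  "AB_block A B = (\<chi> i j. case j of Inl a \<Rightarrow> A $ i $ a | Inr b \<Rightarrow> B $ i $ b)"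

definition max_isotropic_data :: "complex^'e^'e \<Rightarrow> complex^'e^'e \<Rightarrow> bool" where
  "max_isotropic_data A B \<longleftrightarrow>
     rank (AB_block A B) = CARD('e) \<and> cmat_adj (A ** cmat_adj B) = A ** cmat_adj B"

definition smatrix :: "complex^'e^'e \<Rightarrow> complex^'e^'e \<Rightarrow> complex \<Rightarrow> complex^'e^'e" where
  "smatrix A B k = - (matrix_inv (A + cmat_scale (\<i> * k) B) ** (A - cmat_scale (\<i> * k) B))"

definition strictly_positive :: "complex^'e^'e \<Rightarrow> complex^'e^'e \<Rightarrow> bool" where
  "strictly_positive A B \<longleftrightarrow>
     (\<exists>\<kappa>0::real. \<kappa>0 \<ge> 0 \<and> (\<forall>\<kappa>\<ge>\<kappa>0. \<forall>i j.
        (mat 1 + smatrix A B (\<i> * complex_of_real \<kappa>)) $ i $ j \<in> \<real> \<and>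
        Re ((mat 1 + smatrix A B (\<i> * complex_of_real \<kappa>)) $ i $ j) > 0))"

text \<open>f on [0,oo) (zero on the negative axis) lies in L^2, f and f' = f1 are (locally)
  absolutely continuous, i.e. indefinite integrals, and f'' = f2 lies in L^2.\<close>
definition H2_half :: "(real \<Rightarrow> complex) \<Rightarrow> (real \<Rightarrow> complex) \<Rightarrow> (real \<Rightarrow> complex) \<Rightarrow> bool" where
  "H2_half f f1 f2 \<longleftrightarrow>
     (\<forall>x<0. f x = 0) \<and>
     (\<forall>x\<ge>0. f2 absolutely_integrable_on {0..x}) \<and>
     (\<forall>x\<ge>0. f1 x = f1 0 + integral {0..x} f2) \<and>
     (\<forall>x\<ge>0. f x = f 0 + integral {0..x} f1) \<and>
     (\<lambda>x. (cmod (f x))\<^sup>2) integrable_on {0..} \<and>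
     (\<lambda>x. (cmod (f2 x))\<^sup>2) integrable_on {0..}"

definition eigenspace_negLap ::
  "complex^'e^'e \<Rightarrow> complex^'e^'e \<Rightarrow> real \<Rightarrow> ('e \<Rightarrow> real \<Rightarrow> complex) set" where
  "eigenspace_negLap A B lam = {\<psi>. \<exists>d1 d2.
     (\<forall>e. H2_half (\<psi> e) (d1 e) (d2 e)) \<and>
     A *v (\<chi> e. \<psi> e 0) + B *v (\<chi> e. d1 e 0) = 0 \<and>
     (\<forall>e. AE x in lebesgue. 0 \<le> x \<longrightarrow> - d2 e x = complex_of_real lam * \<psi> e x)}"

definition is_eigenvalue_negLap :: "complex^'e^'e \<Rightarrow> complex^'e^'e \<Rightarrow> real \<Rightarrow> bool" where
  "is_eigenvalue_negLap A B lam \<longleftrightarrow> (\<exists>\<psi>\<in>eigenspace_negLap A B lam. \<psi> \<noteq> (\<lambda>e x. 0))"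

definition gscale :: "complex \<Rightarrow> ('e \<Rightarrow> real \<Rightarrow> complex) \<Rightarrow> ('e \<Rightarrow> real \<Rightarrow> complex)" where
  "gscale c \<psi> = (\<lambda>e x. c * \<psi> e x)"

definition cdim :: "('e \<Rightarrow> real \<Rightarrow> complex) set \<Rightarrow> nat" where
  "cdim S = vector_space.dim gscale S"

end

theory Submission
  imports Defs
begin

lemma adj_adj[simp]: "cmat_adj (cmat_adj X) = X"
  by (simp add: cmat_adj_def vec_eq_iff)

lemma adj_mult: "cmat_adj (X ** Y) = cmat_adj Y ** cmat_adj X"
  by (simp add: cmat_adj_def vec_eq_iff matrix_matrix_mult_def mult.commute)

lemma adj_add: "cmat_adj (X + Y) = cmat_adj X + cmat_adj Y"
  by (simp add: cmat_adj_def vec_eq_iff)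

lemma adj_scale_real: "cmat_adj (cmat_scale (complex_of_real r) X) = cmat_scale (complex_of_real r) (cmat_adj X)"
  by (simp add: cmat_adj_def cmat_scale_def vec_eq_iff)

lemma adj_mat1[simp]: "cmat_adj (mat 1) = mat 1"
  by (simp add: cmat_adj_def vec_eq_iff mat_def)

lemma scale_mult_left: "cmat_scale c X ** Y = cmat_scale c (X ** Y)"
  by (simp add: cmat_scale_def vec_eq_iff matrix_matrix_mult_def sum_distrib_left mult.assoc)

lemma scale_mult_right: "X ** cmat_scale c Y = cmat_scale c (X ** Y)"
  by (simp add: cmat_scale_def vec_eq_iff matrix_matrix_mult_def sum_distrib_left mult.assoc mult.left_commute)

lemma scale_mv: "cmat_scale c X *v x = c *s (X *v x)"
  by (simp add: cmat_scale_def vec_eq_iff matrix_vector_mult_def sum_distrib_left mult.assoc)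

lemma mv_smult: "(X::complex^'n^'m) *v (c *s x) = c *s (X *v x)"
  by (simp add: vec_eq_iff matrix_vector_mult_def sum_distrib_left mult.left_commute)

lemma scale_add_distrib: "cmat_scale c (X + Y) = cmat_scale c X + cmat_scale c Y"
  by (simp add: cmat_scale_def vec_eq_iff algebra_simps)

lemma scale_scale: "cmat_scale c (cmat_scale d X) = cmat_scale (c*d) X"
  by (simp add: cmat_scale_def vec_eq_iff algebra_simps)

lemma matrix_add_rdistrib: "((X::complex^'n^'m) + Y) ** Z = X ** Z + Y ** Z"
  by (simp add: vec_eq_iff matrix_matrix_mult_def distrib_right sum.distrib)

lemma inv_props:
  fixes M :: "complex^'n^'n"
  assumes "\<forall>x. M *v x = 0 \<longrightarrow> x = 0"
  shows "M ** matrix_inv M = mat 1" "matrix_inv M ** M = mat 1"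
proof -
  have "invertible M" using assms
    by (simp add: invertible_left_inverse matrix_left_invertible_ker)
  then have "\<exists>A'. M ** A' = mat 1 \<and> A' ** M = mat 1" by (simp add: invertible_def)
  then have "M ** matrix_inv M = mat 1 \<and> matrix_inv M ** M = mat 1"
    unfolding matrix_inv_def by (rule someI_ex)
  then show "M ** matrix_inv M = mat 1" "matrix_inv M ** M = mat 1" by auto
qed

lemma mat_mv_real: "mat c *v (x::real^'n) = c *\<^sub>R x"
proof -
  have "(mat c *v x)$i = (c *\<^sub>R x)$i" for i
  proof -
    have "(\<Sum>j\<in>UNIV. (if i = j then c else 0) * x $ j) = (\<Sum>j\<in>UNIV. (if i = j then c * x$j else 0))"
      by (rule sum.cong) simp_all
    then show ?thesis unfolding matrix_vector_mult_def mat_def by simp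
  qed
  then show ?thesis by (simp add: vec_eq_iff)
qed

lemma psd_zero_kernel:
  fixes H :: "real^'n^'n"
  assumes sym: "transpose H = H" and psd: "\<forall>x. 0 \<le> x \<bullet> (H *v x)" and z: "v \<bullet> (H *v v) = 0"
  shows "H *v v = 0"
proof -
  define y where "y = H *v v"
  define a where "a = y \<bullet> y"
  define b where "b = y \<bullet> (H *v y)"
  have b0: "0 \<le> b" using psd b_def by auto
  have vy: "v \<bullet> (H *v y) = a"
  proof -
    have "v \<bullet> (H *v y) = (v v* H) \<bullet> y" by (simp add: dot_lmul_matrix)
    also have "v v* H = H *v v" using vector_transpose_matrix[of v H] sym by simp
    finally show ?thesis by (simp add: y_def a_def)
  qed
  have expand: "(v + t *\<^sub>R y) \<bullet> (H *v (v + t *\<^sub>R y)) = 2*t*a + t^2 * b" for t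
  proof -
    have "(v + t *\<^sub>R y) \<bullet> (H *v (v + t *\<^sub>R y)) =
       v \<bullet> (H *v v) + t * (v \<bullet> (H *v y)) + t * (y \<bullet> (H *v v)) + t*t*(y \<bullet> (H *v y))"
      by (simp add: matrix_vector_right_distrib matrix_vector_mult_scaleR inner_add_left inner_add_right algebra_simps)
    then show ?thesis using z vy by (simp add: y_def[symmetric] a_def b_def power2_eq_square)
  qed
  have "a = 0"
  proof (rule ccontr)
    assume "a \<noteq> 0"
    then have ap: "a > 0" using a_def by (simp add: order_le_neq_trans)
    define t where "t = - a / (b+1)"
    have tb: "t * (b+1) = -a" using b0 by (simp add: t_def)
    have "t^2 * b \<le> t^2 * (b+1)" by (simp add: mult_left_mono)
    also have "\<dots> = t * (t*(b+1))" by (simp add: power2_eq_square)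
    also have "\<dots> = - t * a" using tb by simp
    finally have "2*t*a + t^2*b \<le> t * a" by linarith
    also have "t * a < 0" using ap b0 by (simp add: t_def mult_neg_pos divide_neg_pos) 
    finally have "(v + t *\<^sub>R y) \<bullet> (H *v (v + t *\<^sub>R y)) < 0" using expand by simp
    with psd show False by (meson not_le)
  qed
  then show ?thesis by (simp add: a_def y_def)
qed

lemma perron_positive:
  fixes G :: "real^'n^'n"
  assumes sym: "transpose G = G" and pos: "\<forall>i j. G$i$j > 0" and nu0: "\<nu>0 > 0"
    and bound: "\<forall>v \<nu>. v \<noteq> 0 \<longrightarrow> G *v v = \<nu> *\<^sub>R v \<longrightarrow> \<nu> \<le> \<nu>0"
    and w0: "w \<noteq> 0" and ev: "G *v w = \<nu>0 *\<^sub>R w"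
  shows "w$i \<noteq> 0"
proof -
  define H where "H m = mat (\<nu>0 - m) - G" for m
  have Hv: "H m *v x = (\<nu>0 - m) *\<^sub>R x - G *v x" for m x
    by (simp add: H_def matrix_vector_mult_diff_rdistrib mat_mv_real)
  have Hsym: "transpose (H m) = H m" for m
    using sym by (simp add: H_def transpose_def mat_def vec_eq_iff)
  define q where "q x = x \<bullet> (H 0 *v x)" for x
  have qs: "q (c *\<^sub>R x) = c^2 * q x" for c x
    by (simp add: q_def matrix_vector_mult_scaleR power2_eq_square)
  have "\<exists>v\<in>sphere (0::real^'n) 1. \<forall>y\<in>sphere 0 1. q v \<le> q y"
  proof (rule continuous_attains_inf)
    show "compact (sphere (0::real^'n) 1)" by simp
    show "sphere (0::real^'n) 1 \<noteq> {}" by (simp add: sphere_eq_empty)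
    show "continuous_on (sphere 0 1) q"
      unfolding q_def by (intro continuous_intros matrix_vector_mult_linear_continuous_on)
  qed
  then obtain v where v1: "norm v = 1" and vmin: "\<And>y. norm y = 1 \<Longrightarrow> q v \<le> q y" by auto
  define m where "m = q v"
  have qge: "q x \<ge> m * (x \<bullet> x)" for x
  proof (cases "x = 0")
    case True then show ?thesis by (simp add: q_def)
  next
    case False
    then have nx: "norm x > 0" by simp
    have "m \<le> q ((1/norm x) *\<^sub>R x)" unfolding m_def using nx by (intro vmin) simp
    also have "\<dots> = q x / (norm x)^2" by (simp add: qs power_divide)
    finally have "m * (norm x)^2 \<le> q x" using nx by (simp add: field_simps)
    then show ?thesis by (simp add: power2_norm_eq_inner)
  qed
  have Hm: "x \<bullet> (H m *v x) = q x - m * (x \<bullet> x)" for x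
    by (simp add: q_def Hv inner_diff_right algebra_simps)
  have "H m *v v = 0"
  proof (rule psd_zero_kernel[OF Hsym])
    show "\<forall>x. 0 \<le> x \<bullet> (H m *v x)" using qge Hm by simp
    show "v \<bullet> (H m *v v) = 0" using Hm v1 by (simp add: m_def power2_norm_eq_inner[symmetric])
  qed
  then have "G *v v = (\<nu>0 - m) *\<^sub>R v" by (simp add: Hv)
  moreover have "v \<noteq> 0" using v1 by auto
  ultimately have "\<nu>0 - m \<le> \<nu>0" using bound by blast
  then have m0: "m \<ge> 0" by simp
  have qpos: "q x \<ge> 0" for x using qge[of x] m0 by (meson order_trans zero_le_mult_iff inner_ge_zero)
  define aw where "aw = (\<chi> i. \<bar>w$i\<bar>)"
  have ww: "aw \<bullet> aw = w \<bullet> w" by (simp add: aw_def inner_vec_def)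
  have cmp: "w \<bullet> (G *v w) \<le> aw \<bullet> (G *v aw)"
    unfolding aw_def inner_vec_def matrix_vector_mult_def
    apply (simp add: sum_distrib_left)
    apply (intro sum_mono)
    subgoal for i j
    proof -
      have "w$i * (G$i$j * w$j) \<le> \<bar>w$i * (G$i$j * w$j)\<bar>" by simp
      also have "\<dots> = \<bar>w$i\<bar> * (G$i$j * \<bar>w$j\<bar>)" using pos by (simp add: abs_mult less_imp_le)
      finally show ?thesis .
    qed
    done
  have "w \<bullet> (G *v w) = \<nu>0 * (w \<bullet> w)" by (simp add: ev)
  then have "q aw \<le> 0" using cmp ww by (simp add: q_def Hv inner_diff_right)
  then have "aw \<bullet> (H 0 *v aw) = 0" using qpos[of aw] by (simp add: q_def)
  then have "H 0 *v aw = 0" by (intro psd_zero_kernel[OF Hsym]) (use qpos q_def in auto)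
  then have Gaw: "G *v aw = \<nu>0 *\<^sub>R aw" by (simp add: Hv)
  obtain j where wj: "w$j \<noteq> 0" using w0 by (auto simp: vec_eq_iff)
  have "0 < (\<Sum>k\<in>UNIV. G$i$k * aw$k)"
    by (rule sum_pos2[of _ j]) (use pos wj in \<open>auto simp: aw_def less_imp_le\<close>)
  also have "\<dots> = \<nu>0 * aw$i" using Gaw by (simp add: vec_eq_iff matrix_vector_mult_def)
  finally show ?thesis using nu0 by (auto simp: aw_def)
qed

lemma real_part_ev:
  fixes N :: "complex^'n^'n" and Gm :: "real^'n^'n"
  assumes NG: "\<forall>i j. N$i$j = complex_of_real (Gm$i$j)"
    and ev: "N *v c = complex_of_real \<nu> *s c"
  shows "Gm *v (\<chi> i. Re (c$i)) = \<nu> *\<^sub>R (\<chi> i. Re (c$i))"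
    and "Gm *v (\<chi> i. Im (c$i)) = \<nu> *\<^sub>R (\<chi> i. Im (c$i))"
proof -
  have e: "(\<Sum>j\<in>UNIV. complex_of_real (Gm$i$j) * c$j) = complex_of_real \<nu> * c$i" for i
    using ev NG by (simp add: vec_eq_iff matrix_vector_mult_def)
  have "Re (\<Sum>j\<in>UNIV. complex_of_real (Gm$i$j) * c$j) = (\<Sum>j\<in>UNIV. Gm$i$j * Re (c$j))" for i
    by (simp add: Re_sum)
  moreover have "Im (\<Sum>j\<in>UNIV. complex_of_real (Gm$i$j) * c$j) = (\<Sum>j\<in>UNIV. Gm$i$j * Im (c$j))" for i
    by (simp add: Im_sum)
  ultimately show "Gm *v (\<chi> i. Re (c$i)) = \<nu> *\<^sub>R (\<chi> i. Re (c$i))"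
    and "Gm *v (\<chi> i. Im (c$i)) = \<nu> *\<^sub>R (\<chi> i. Im (c$i))"
    using e by (auto simp: vec_eq_iff matrix_vector_mult_def)
qed

lemma perron_unique:
  fixes G :: "real^'n^'n"
  assumes sym: "transpose G = G" and pos: "\<forall>i j. G$i$j > 0" and nu0: "\<nu>0 > 0"
    and bound: "\<forall>v \<nu>. v \<noteq> 0 \<longrightarrow> G *v v = \<nu> *\<^sub>R v \<longrightarrow> \<nu> \<le> \<nu>0"
    and w0: "w \<noteq> 0" and ev: "G *v w = \<nu>0 *\<^sub>R w"
    and evu: "G *v u = \<nu>0 *\<^sub>R u"
  shows "u = (u$i0 / w$i0) *\<^sub>R w"
proof -
  have wi: "w$i0 \<noteq> 0" using perron_positive[OF sym pos nu0 bound w0 ev] .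
  define z where "z = u - (u$i0 / w$i0) *\<^sub>R w"
  have evz: "G *v z = \<nu>0 *\<^sub>R z"
    by (simp add: z_def matrix_vector_mult_diff_distrib matrix_vector_mult_scaleR evu ev algebra_simps)
  have "z$i0 = 0" using wi by (simp add: z_def)
  then have "z = 0" using perron_positive[OF sym pos nu0 bound _ evz] by blast
  then show ?thesis by (simp add: z_def)
qed

lemma LA:
  fixes A B :: "complex^'e::finite^'e" and \<kappa> :: real
  assumes herm: "A ** cmat_adj B = B ** cmat_adj A"
    and sp: "strictly_positive A B" and kp: "\<kappa> > 0"
    and noev: "\<forall>t c. t > \<kappa> \<longrightarrow> A *v c = complex_of_real t *s (B *v c) \<longrightarrow> c = 0"
    and c00: "c0 \<noteq> 0" and c0: "A *v c0 = complex_of_real \<kappa> *s (B *v c0)"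
    and c: "A *v c = complex_of_real \<kappa> *s (B *v c)"
  shows "\<exists>\<alpha>. c = \<alpha> *s c0"
proof -
  obtain \<kappa>0 where k0: "\<kappa>0 \<ge> 0" and pos: "\<forall>\<kappa>\<ge>\<kappa>0. \<forall>i j.
        (mat 1 + smatrix A B (\<i> * complex_of_real \<kappa>)) $ i $ j \<in> \<real> \<and>
        Re ((mat 1 + smatrix A B (\<i> * complex_of_real \<kappa>)) $ i $ j) > 0"
    using sp unfolding strictly_positive_def by blast
  define k1 where "k1 = max \<kappa>0 (\<kappa>+1)"
  have k1k: "k1 > \<kappa>" "k1 \<ge> \<kappa>0" "k1 > 0" using kp by (auto simp: k1_def)
  define M where "M = A + cmat_scale (- complex_of_real k1) B"
  have ii: "\<i> * (\<i> * complex_of_real k1) = - complex_of_real k1"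
    by (simp add: mult.assoc[symmetric])
  have Mv: "M *v x = A *v x - complex_of_real k1 *s (B *v x)" for x
    by (simp add: M_def matrix_vector_mult_add_rdistrib scale_mv vector_smult_lneg)
  have Minj: "\<forall>x. M *v x = 0 \<longrightarrow> x = 0"
    using noev k1k by (auto simp: Mv)
  define Mi where "Mi = matrix_inv M"
  have inv1: "M ** Mi = mat 1" and inv2: "Mi ** M = mat 1"
    using inv_props[OF Minj] by (auto simp: Mi_def)
  define N where "N = cmat_scale (- 2 * complex_of_real k1) (Mi ** B)"
  have Nform: "mat 1 + smatrix A B (\<i> * complex_of_real k1) = N"
  proof -
    have "A - cmat_scale (\<i> * (\<i> * complex_of_real k1)) B = M + cmat_scale (2 * complex_of_real k1) B"
      by (simp add: ii M_def cmat_scale_def vec_eq_iff)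
    then have "smatrix A B (\<i> * complex_of_real k1) = - (Mi ** (M + cmat_scale (2 * complex_of_real k1) B))"
      unfolding smatrix_def ii by (simp add: M_def[symmetric] Mi_def)
    also have "\<dots> = - (mat 1 + cmat_scale (2 * complex_of_real k1) (Mi ** B))"
      by (simp add: matrix_add_ldistrib scale_mult_right inv2)
    finally show ?thesis by (simp add: N_def cmat_scale_def vec_eq_iff)
  qed
  have MB: "M ** cmat_adj B = B ** cmat_adj M"
  proof -
    have "cmat_adj M = cmat_adj A + cmat_scale (complex_of_real (-k1)) (cmat_adj B)"
      using adj_scale_real[of "-k1" B] by (simp add: M_def adj_add)
    then have "B ** cmat_adj M = B ** cmat_adj A + cmat_scale (- complex_of_real k1) (B ** cmat_adj B)"
      by (simp add: matrix_add_ldistrib scale_mult_right)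
    moreover have "M ** cmat_adj B = A ** cmat_adj B + cmat_scale (- complex_of_real k1) (B ** cmat_adj B)"
      unfolding M_def by (simp only: matrix_add_rdistrib scale_mult_left)
    ultimately show ?thesis using herm by simp
  qed
  have hermP: "cmat_adj (Mi ** B) = Mi ** B"
  proof -
    have "cmat_adj (Mi ** B) = (Mi ** M) ** (cmat_adj B ** cmat_adj Mi)"
      by (simp add: adj_mult inv2)
    also have "\<dots> = Mi ** ((M ** cmat_adj B) ** cmat_adj Mi)" by (simp add: matrix_mul_assoc)
    also have "\<dots> = Mi ** (B ** (cmat_adj M ** cmat_adj Mi))" by (simp add: MB matrix_mul_assoc)
    also have "cmat_adj M ** cmat_adj Mi = mat 1" by (simp add: adj_mult[symmetric] inv2)
    finally show ?thesis by simp
  qed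
  have hermN: "cmat_adj N = N"
    using hermP adj_scale_real[of "-2*k1" "Mi ** B"] by (simp add: N_def)
  have Nent: "N$i$j \<in> \<real> \<and> Re (N$i$j) > 0" for i j
  proof -
    have "(mat 1 + smatrix A B (\<i> * complex_of_real k1)) $ i $ j \<in> \<real> \<and>
        Re ((mat 1 + smatrix A B (\<i> * complex_of_real k1)) $ i $ j) > 0"
      using pos k1k(2) by blast
    then show ?thesis by (simp only: Nform)
  qed
  define Gm where "Gm = (\<chi> i j. Re (N$i$j))"
  have NG: "\<forall>i j. N$i$j = complex_of_real (Gm$i$j)"
    using Nent by (simp add: Gm_def of_real_Re)
  have Gpos: "\<forall>i j. Gm$i$j > 0" using Nent by (simp add: Gm_def)
  have Gsym: "transpose Gm = Gm"
  proof -
    have "N$i$j = cnj (N$j$i)" for i j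
    proof -
      have "cmat_adj N $ i $ j = cnj (N$j$i)" by (simp add: cmat_adj_def)
      then show ?thesis using hermN by simp
    qed
    then have "Re (N$i$j) = Re (N$j$i)" for i j by (metis cnj.sel(1))
    then show ?thesis unfolding Gm_def transpose_def vec_eq_iff by simp
  qed
  have Nv: "N *v x = (- 2 * complex_of_real k1) *s (Mi *v (B *v x))" for x
    by (simp add: N_def scale_mv matrix_vector_mul_assoc)
  have MMi: "M *v (Mi *v y) = y" for y
    by (simp add: matrix_vector_mul_assoc inv1)
  have MiM: "Mi *v (M *v y) = y" for y
    by (simp add: matrix_vector_mul_assoc inv2)
  define \<nu>0 where "\<nu>0 = 2 * k1 / (k1 - \<kappa>)"
  have nu0: "\<nu>0 > 0" using k1k by (simp add: \<nu>0_def)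
  have EV1: "N *v x = complex_of_real \<nu>0 *s x" if hx: "A *v x = complex_of_real \<kappa> *s (B *v x)" for x
  proof -
    have "M *v x = complex_of_real (\<kappa> - k1) *s (B *v x)"
      by (simp add: Mv hx vector_sub_rdistrib)
    then have "x = Mi *v (complex_of_real (\<kappa> - k1) *s (B *v x))"
      using MiM[of x] by metis
    then have "x = complex_of_real (\<kappa> - k1) *s (Mi *v (B *v x))"
      by (simp only: mv_smult)
    then have "Mi *v (B *v x) = complex_of_real (1 / (\<kappa> - k1)) *s x"
      using k1k by (simp add: vec_eq_iff field_simps)
    then show ?thesis using k1k
      by (simp add: Nv \<nu>0_def vec_eq_iff field_simps)
  qed
  have bound: "\<forall>v \<nu>. v \<noteq> 0 \<longrightarrow> Gm *v v = \<nu> *\<^sub>R v \<longrightarrow> \<nu> \<le> \<nu>0"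
  proof (intro allI impI)
    fix v :: "real^'e" and \<nu> :: real
    assume v0: "v \<noteq> 0" and evv: "Gm *v v = \<nu> *\<^sub>R v"
    show "\<nu> \<le> \<nu>0"
    proof (cases "\<nu> \<le> 0")
      case True then show ?thesis using nu0 by simp
    next
      case False
      then have np: "\<nu> > 0" by simp
      define x where "x = (\<chi> i. complex_of_real (v$i))"
      have x0: "x \<noteq> 0" using v0 by (auto simp: x_def vec_eq_iff)
      have "N *v x = complex_of_real \<nu> *s x"
      proof -
        have "(\<Sum>j\<in>UNIV. Gm$i$j * v$j) = \<nu> * v$i" for i
          using evv by (simp add: vec_eq_iff matrix_vector_mult_def)
        then have "(\<Sum>j\<in>UNIV. complex_of_real (Gm$i$j) * complex_of_real (v$j)) = complex_of_real \<nu> * complex_of_real (v$i)" for i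
          by (metis (no_types, lifting) of_real_mult of_real_sum sum.cong)
        then show ?thesis using NG by (simp add: x_def vec_eq_iff matrix_vector_mult_def)
      qed
      then have "(- 2 * complex_of_real k1) *s (Mi *v (B *v x)) = complex_of_real \<nu> *s x"
        by (simp add: Nv)
      then have "M *v ((- 2 * complex_of_real k1) *s (Mi *v (B *v x))) = M *v (complex_of_real \<nu> *s x)"
        by simp
      moreover have "M *v ((- 2 * complex_of_real k1) *s (Mi *v (B *v x))) = (- 2 * complex_of_real k1) *s (B *v x)"
        by (simp only: mv_smult MMi)
      moreover have "M *v (complex_of_real \<nu> *s x) = complex_of_real \<nu> *s (A *v x - complex_of_real k1 *s (B *v x))"
        by (simp only: mv_smult Mv)
      ultimately have "(- 2 * complex_of_real k1) *s (B *v x) = complex_of_real \<nu> *s (A *v x - complex_of_real k1 *s (B *v x))"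
        by simp
      then have comp: "- 2 * complex_of_real k1 * (B *v x)$i = complex_of_real \<nu> * ((A *v x)$i - complex_of_real k1 * (B *v x)$i)" for i
        by (simp add: vec_eq_iff algebra_simps)
      define t where "t = k1 - 2 * k1 / \<nu>"
      have "A *v x = complex_of_real t *s (B *v x)"
      proof -
        have "(A *v x)$i = complex_of_real t * (B *v x)$i" for i
          using comp[of i] np by (simp add: t_def field_simps)
        then show ?thesis by (simp add: vec_eq_iff)
      qed
      then have "\<not> t > \<kappa>" using noev x0 by blast
      then have "k1 - 2 * k1 / \<nu> \<le> \<kappa>" by (simp add: t_def)
      then have "k1 * \<nu> - 2 * k1 \<le> \<kappa> * \<nu>" using np by (simp add: field_simps)
      then have "\<nu> * (k1 - \<kappa>) \<le> 2 * k1" by (simp add: algebra_simps)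
      then show ?thesis using k1k by (simp add: \<nu>0_def field_simps)
    qed
  qed
  define rc0 where "rc0 = (\<chi> i. Re (c0$i))"
  define ic0 where "ic0 = (\<chi> i. Im (c0$i))"
  define rc where "rc = (\<chi> i. Re (c$i))"
  define ic where "ic = (\<chi> i. Im (c$i))"
  have evs: "Gm *v rc0 = \<nu>0 *\<^sub>R rc0" "Gm *v ic0 = \<nu>0 *\<^sub>R ic0"
     "Gm *v rc = \<nu>0 *\<^sub>R rc" "Gm *v ic = \<nu>0 *\<^sub>R ic"
    using real_part_ev[OF NG EV1[OF c0]] real_part_ev[OF NG EV1[OF c]]
    by (auto simp: rc0_def ic0_def rc_def ic_def)
  define w where "w = (if rc0 \<noteq> 0 then rc0 else ic0)"
  have w0: "w \<noteq> 0"
  proof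
    assume "w = 0"
    then have "rc0 = 0 \<and> ic0 = 0" by (auto simp: w_def split: if_splits)
    then have "c0 = 0" by (auto simp: rc0_def ic0_def vec_eq_iff complex_eq_iff)
    with c00 show False by simp
  qed
  have evw: "Gm *v w = \<nu>0 *\<^sub>R w" using evs by (simp add: w_def)
  note U = perron_unique[OF Gsym Gpos nu0 bound w0 evw]
  obtain i0 :: 'e where True by simp
  define a where "a = rc$i0 / w$i0"
  define b where "b = ic$i0 / w$i0"
  define a0 where "a0 = rc0$i0 / w$i0"
  define b0 where "b0 = ic0$i0 / w$i0"
  have r: "rc = a *\<^sub>R w" "ic = b *\<^sub>R w" "rc0 = a0 *\<^sub>R w" "ic0 = b0 *\<^sub>R w"
    using U[OF evs(3), of i0] U[OF evs(4), of i0] U[OF evs(1), of i0] U[OF evs(2), of i0]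
    by (simp_all add: a_def b_def a0_def b0_def)
  define wc where "wc = (\<chi> i. complex_of_real (w$i))"
  have cc: "c = Complex a b *s wc" "c0 = Complex a0 b0 *s wc"
    using r by (auto simp: vec_eq_iff rc_def ic_def rc0_def ic0_def wc_def complex_eq_iff)
  have nz: "Complex a0 b0 \<noteq> 0" using cc c00 by auto
  show ?thesis
    by (rule exI[of _ "Complex a b / Complex a0 b0"]) (use cc nz in \<open>simp add: vector_smult_assoc\<close>)
qed

lemma E_deriv:
  "((\<lambda>y. a * complex_of_real (exp (-k*y))) has_vector_derivative (- (complex_of_real k * a) * complex_of_real (exp (-k*x)))) (at x within S)"
proof -
  have "((\<lambda>y. exp (-k*y)) has_real_derivative (- k * exp (-k*x))) (at x within S)"
    by (auto intro!: derivative_eq_intros)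
  from has_vector_derivative_mult_right[OF has_vector_derivative_of_real[OF this], of a]
  show ?thesis by (simp add: algebra_simps)
qed

lemma exp_sq_integrable:
  assumes "k > 0"
  shows "(\<lambda>x. (cmod (c * complex_of_real (exp (-k*x))))\<^sup>2) integrable_on {0..}"
proof -
  have "(\<lambda>x. (cmod c)\<^sup>2 * exp (- (2*k) * x)) integrable_on {0..}"
  proof -
    have "(\<lambda>x. exp (- (2*k) * x)) integrable_on {0..}"
      using integrable_on_exp_minus_to_infinity[of "2*k" 0] assms by simp
    from integrable_cmul[OF this, of "(cmod c)\<^sup>2"] show ?thesis by simp
  qed
  moreover have "(cmod (c * complex_of_real (exp (-k*x))))\<^sup>2 = (cmod c)\<^sup>2 * exp (- (2*k) * x)" for x
    by (simp add: norm_mult power_mult_distrib power2_eq_square exp_add[symmetric])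
  ultimately show ?thesis by simp
qed

lemma expdecay_H2:
  assumes kp: "k > 0"
  shows "H2_half (\<lambda>x. if 0 \<le> x then a * complex_of_real (exp (-k*x)) else 0)
                 (\<lambda>x. - (complex_of_real k * a) * complex_of_real (exp (-k*x)))
                 (\<lambda>x. (complex_of_real k)\<^sup>2 * a * complex_of_real (exp (-k*x)))"
  unfolding H2_half_def
proof (intro conjI allI impI)
  let ?f = "\<lambda>x. if 0 \<le> x then a * complex_of_real (exp (-k*x)) else 0"
  let ?f1 = "\<lambda>x. - (complex_of_real k * a) * complex_of_real (exp (-k*x))"
  let ?f2 = "\<lambda>x. (complex_of_real k)\<^sup>2 * a * complex_of_real (exp (-k*x))"
  fix x :: real
  show "x < 0 \<Longrightarrow> ?f x = 0" by simp
  show "?f2 absolutely_integrable_on {0..x}"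
    by (intro absolutely_integrable_continuous_real continuous_intros)
  assume x0: "0 \<le> x"
  have d1: "(?f1 has_vector_derivative ?f2 y) (at y within {0..x})" for y
    using E_deriv[of "- (complex_of_real k * a)" k y "{0..x}"] by (simp add: power2_eq_square algebra_simps)
  have I1: "(?f2 has_integral ?f1 x - ?f1 0) {0..x}"
    by (rule fundamental_theorem_of_calculus[OF x0]) (use d1 in auto)
  show "?f1 x = ?f1 0 + integral {0..x} ?f2" unfolding integral_unique[OF I1] by simp
  have I2: "(?f1 has_integral
          a * complex_of_real (exp (-k*x)) - a * complex_of_real (exp (-k*0))) {0..x}"
    by (rule fundamental_theorem_of_calculus[OF x0]) (use E_deriv[of a k] in auto)
  show "?f x = ?f 0 + integral {0..x} ?f1" using x0 unfolding integral_unique[OF I2] by simp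
next
  let ?f = "\<lambda>x. if 0 \<le> x then a * complex_of_real (exp (-k*x)) else 0"
  show "(\<lambda>x. (cmod (?f x))\<^sup>2) integrable_on {0..}"
    using exp_sq_integrable[OF kp, of a] by (rule integrable_eq) simp
  show "(\<lambda>x. (cmod ((complex_of_real k)\<^sup>2 * a * complex_of_real (exp (-k*x))))\<^sup>2) integrable_on {0..}"
    using exp_sq_integrable[OF kp, of "(complex_of_real k)\<^sup>2 * a"] by simp
qed

lemma construct_eigen:
  fixes A B :: "complex^'e::finite^'e"
  assumes kp: "k > 0" and ker: "A *v c = complex_of_real k *s (B *v c)" and c0: "c \<noteq> 0"
  shows "is_eigenvalue_negLap A B (- (k^2))"
proof -
  define \<psi> where "\<psi> = (\<lambda>e x. if 0 \<le> x then c$e * complex_of_real (exp (-k*x)) else 0)"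
  define d1 where "d1 = (\<lambda>e x. - (complex_of_real k * c$e) * complex_of_real (exp (-k*x)))"
  define d2 where "d2 = (\<lambda>e x. (complex_of_real k)\<^sup>2 * c$e * complex_of_real (exp (-k*x)))"
  have H: "\<forall>e. H2_half (\<psi> e) (d1 e) (d2 e)"
    unfolding \<psi>_def d1_def d2_def using expdecay_H2[OF kp] by blast
  have bc: "A *v (\<chi> e. \<psi> e 0) + B *v (\<chi> e. d1 e 0) = 0"
  proof -
    have "(\<chi> e. \<psi> e 0) = c" by (simp add: \<psi>_def vec_eq_iff)
    moreover have "(\<chi> e. d1 e 0) = (- complex_of_real k) *s c" by (simp add: d1_def vec_eq_iff)
    ultimately show ?thesis
      using ker by (simp add: vec_eq_iff matrix_vector_mult_def sum_distrib_left sum_negf algebra_simps)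
  qed
  have ae: "\<forall>e. AE x in lebesgue. 0 \<le> x \<longrightarrow> - d2 e x = complex_of_real (- (k^2)) * \<psi> e x"
    by (simp add: d2_def \<psi>_def power2_eq_square)
  have mem: "\<psi> \<in> eigenspace_negLap A B (- (k^2))"
    unfolding eigenspace_negLap_def using H bc ae by blast
  obtain e where "c$e \<noteq> 0" using c0 by (auto simp: vec_eq_iff)
  then have "\<psi> \<noteq> (\<lambda>e x. 0)" by (auto simp: \<psi>_def fun_eq_iff intro!: exI[of _ e] exI[of _ 0])
  then show ?thesis unfolding is_eigenvalue_negLap_def using mem by blast
qed

lemma not_L2:
  fixes g :: "real \<Rightarrow> real"
  assumes int: "g integrable_on {0..}" and nonneg: "\<forall>x\<ge>0. 0 \<le> g x"
    and cont: "\<forall>b\<ge>0. continuous_on {0..b} g"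
    and dp: "\<delta> > 0" and X0: "X \<ge> 0" and low: "\<forall>x\<ge>X. g x \<ge> \<delta>"
  shows False
proof -
  define I where "I = integral {0..} g"
  have I0: "I \<ge> 0" unfolding I_def using nonneg by (intro integral_nonneg int) auto
  define n where "n = I / \<delta> + 1"
  have np: "n > 0" using I0 dp by (simp add: n_def add_nonneg_pos)
  have sub: "{X..X+n} \<subseteq> {0..X+n}" using X0 by auto
  have cX: "continuous_on {X..X+n} g"
    using cont X0 np by (intro continuous_on_subset[OF _ sub]) auto
  have intX: "g integrable_on {X..X+n}" by (rule integrable_continuous_interval[OF cX])
  have "integral {X..X+n} (\<lambda>x. \<delta>) \<le> integral {X..X+n} g"
    by (rule integral_le) (use low X0 intX in auto)
  moreover have "integral {X..X+n} (\<lambda>x. \<delta>) = n * \<delta>" using np by simp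
  moreover have "integral {X..X+n} g \<le> I"
    unfolding I_def by (rule integral_subset_le) (use X0 intX int nonneg in auto)
  ultimately have "n * \<delta> \<le> I" by linarith
  moreover have "n * \<delta> = I + \<delta>" using dp by (simp add: n_def field_simps)
  ultimately show False using dp by linarith
qed

lemma Ep_deriv:
  "((\<lambda>y. complex_of_real (exp (k*y))) has_vector_derivative (complex_of_real k * complex_of_real (exp (k*x)))) (at x within S)"
proof -
  have "((\<lambda>y. exp (k*y)) has_real_derivative (k * exp (k*x))) (at x within S)"
    by (auto intro!: derivative_eq_intros)
  from has_vector_derivative_of_real[OF this] show ?thesis by simp
qed

lemma zero_deriv_const:
  assumes "\<forall>w\<in>{a..b}. (g has_vector_derivative 0) (at w within {a..b})" "x \<in> {a..b}" "y \<in> {a..b}"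
  shows "g x = g y"
proof -
  obtain c where "\<And>w. w \<in> {a..b} \<Longrightarrow> g w = c"
    by (rule has_vector_derivative_zero_constant[of "{a..b}" g]) (use assms in auto)
  then show ?thesis using assms by auto
qed

lemma edge_ode:
  fixes f f1 f2 :: "real \<Rightarrow> complex" and k :: real
  assumes H: "H2_half f f1 f2"
    and ae: "AE x in lebesgue. 0 \<le> x \<longrightarrow> - f2 x = complex_of_real (- (k^2)) * f x"
    and k0: "k \<ge> 0"
  shows "k = 0 \<Longrightarrow> \<forall>x. f x = 0"
    and "k > 0 \<Longrightarrow> (\<forall>x\<ge>0. f x = f 0 * complex_of_real (exp (- k * x))) \<and> f1 0 = - complex_of_real k * f 0"
proof -
  define K where "K = complex_of_real k"
  obtain N where N: "N \<in> null_sets lebesgue" and NP: "\<And>x. x \<in> space lebesgue - N \<Longrightarrow> 0 \<le> x \<longrightarrow> - f2 x = complex_of_real (- (k^2)) * f x"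
    using AE_E3[OF ae] by blast
  have negN: "negligible N" using N by (simp add: negligible_iff_null_sets)
  note Hc = H[unfolded H2_half_def]
  define a0 where "a0 = f 0"
  define a1 where "a1 = f1 0"
  have fneg: "\<forall>x<0. f x = 0" using Hc by blast
  have f2ai: "\<forall>x\<ge>0. f2 absolutely_integrable_on {0..x}" using Hc by blast
  have f1eq: "\<forall>x\<ge>0. f1 x = a1 + integral {0..x} f2" using Hc unfolding a1_def by blast
  have feq: "\<forall>x\<ge>0. f x = a0 + integral {0..x} f1" using Hc unfolding a0_def by blast
  have L2: "(\<lambda>x. (cmod (f x))\<^sup>2) integrable_on {0..}" using Hc by blast
  have f2eq: "f2 y = K^2 * f y" if "y \<notin> N" "0 \<le> y" for y
    using NP[of y] that by (simp add: K_def)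
  have main: "continuous_on {0..b} f \<and>
      (\<forall>u\<in>{0..b}. (f has_vector_derivative f1 u) (at u within {0..b})) \<and>
      (\<forall>u\<in>{0..b}. (f1 has_vector_derivative K^2 * f u) (at u within {0..b}))" if b0: "b \<ge> 0" for b
  proof -
    have f2int: "f2 integrable_on {0..b}" using f2ai b0 set_lebesgue_integral_eq_integral(1) by blast
    have c1: "continuous_on {0..b} f1"
    proof -
      have "continuous_on {0..b} (\<lambda>u. a1 + integral {0..u} f2)"
        by (rule continuous_on_add[OF continuous_on_const indefinite_integral_continuous_1[OF f2int]])
      then show ?thesis by (rule continuous_on_cong[THEN iffD1, rotated 2]) (use f1eq in auto)
    qed
    have c0: "continuous_on {0..b} f"
    proof -
      have "continuous_on {0..b} (\<lambda>u. a0 + integral {0..u} f1)"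
        by (rule continuous_on_add[OF continuous_on_const indefinite_integral_continuous_1[OF integrable_continuous_interval[OF c1]]])
      then show ?thesis by (rule continuous_on_cong[THEN iffD1, rotated 2]) (use feq in auto)
    qed
    have D0: "(f has_vector_derivative f1 u) (at u within {0..b})" if u: "u \<in> {0..b}" for u
    proof -
      have "((\<lambda>u. a0 + integral {0..u} f1) has_vector_derivative f1 u) (at u within {0..b})"
        using has_vector_derivative_add[OF has_vector_derivative_const integral_has_vector_derivative[OF c1 u]]
        by simp
      then show ?thesis by (rule has_vector_derivative_transform[OF u, rotated]) (use feq in auto)
    qed
    have c2: "continuous_on {0..b} (\<lambda>y. K^2 * f y)" by (rule continuous_on_mult[OF continuous_on_const c0])
    have D1: "(f1 has_vector_derivative K^2 * f u) (at u within {0..b})" if u: "u \<in> {0..b}" for u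
    proof -
      have "((\<lambda>u. a1 + integral {0..u} (\<lambda>y. K^2 * f y)) has_vector_derivative K^2 * f u) (at u within {0..b})"
        using has_vector_derivative_add[OF has_vector_derivative_const integral_has_vector_derivative[OF c2 u]]
        by simp
      moreover have "f1 v = a1 + integral {0..v} (\<lambda>y. K^2 * f y)" if "v \<in> {0..b}" for v
      proof -
        have "integral {0..v} f2 = integral {0..v} (\<lambda>y. K^2 * f y)"
          by (rule integral_spike[OF negN]) (use f2eq in auto)
        then show ?thesis using f1eq that by auto
      qed
      ultimately show ?thesis by (rule has_vector_derivative_transform[OF u, rotated])
    qed
    show ?thesis using c0 D0 D1 by blast
  qed
  have L2low: False if X0: "X \<ge> 0" and dp: "\<delta> > 0" and low: "\<forall>x\<ge>X. cmod (f x) \<ge> \<delta>" for X \<delta>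
  proof (rule not_L2[OF L2 _ _ _ X0])
    show "\<forall>x\<ge>0. 0 \<le> (cmod (f x))\<^sup>2" by simp
    show "\<forall>b\<ge>0. continuous_on {0..b} (\<lambda>x. (cmod (f x))\<^sup>2)"
    proof (intro allI impI)
      fix b :: real assume "b \<ge> 0"
      from main[OF this] have "continuous_on {0..b} f" by blast
      then show "continuous_on {0..b} (\<lambda>x. (cmod (f x))\<^sup>2)" by (intro continuous_on_power continuous_on_norm)
    qed
    show "\<delta>^2 > 0" using dp by simp
    show "\<forall>x\<ge>X. \<delta>^2 \<le> (cmod (f x))\<^sup>2" using low dp by (auto intro: power_mono)
  qed
  show "k = 0 \<Longrightarrow> \<forall>x. f x = 0"
  proof -
    assume kz: "k = 0"
    define D where "D = f1 0"
    have lin: "f u = f 0 + D * complex_of_real u" if u0: "u \<ge> 0" for u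
    proof -
      note m = main[OF u0]
      have "f1 v = D" if "v \<in> {0..u}" for v
      proof -
        have "\<forall>w\<in>{0..u}. (f1 has_vector_derivative 0) (at w within {0..u})"
          using m kz by (simp add: K_def)
        from zero_deriv_const[OF this that, of 0] u0 show ?thesis by (simp add: D_def)
      qed
      moreover have "((\<lambda>v. f v - D * complex_of_real v) has_vector_derivative 0) (at w within {0..u})"
        if w: "w \<in> {0..u}" for w
      proof -
        have "((\<lambda>v. D * complex_of_real v) has_vector_derivative D * complex_of_real 1) (at w within {0..u})"
          by (intro has_vector_derivative_mult_right has_vector_derivative_of_real) (auto intro!: derivative_eq_intros)
        from has_vector_derivative_diff[OF bspec[OF conjunct1[OF conjunct2[OF m]] w] this]
        show ?thesis using calculation w by simp
      qed
      then have "f u - D * complex_of_real u = f 0 - D * complex_of_real 0"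
        using u0 by (intro zero_deriv_const[of 0 u]) auto
      then show ?thesis by (simp add: diff_eq_eq add.commute)
    qed
    have D0: "D = 0"
    proof (rule ccontr)
      assume Dn: "D \<noteq> 0"
      define X where "X = (cmod (f 0) + 1) / cmod D"
      show False
      proof (rule L2low[of X 1])
        show "X \<ge> 0" using Dn by (simp add: X_def)
        show "\<forall>x\<ge>X. 1 \<le> cmod (f x)"
        proof (intro allI impI)
          fix x assume xX: "X \<le> x"
          then have x0: "x \<ge> 0" using \<open>X \<ge> 0\<close> by linarith
          have "cmod D * x \<ge> cmod (f 0) + 1" using xX Dn by (simp add: X_def field_simps)
          moreover have "cmod (D * complex_of_real x) - cmod (f 0) \<le> cmod (f x)"
            using lin[OF x0] norm_diff_ineq[of "D * complex_of_real x" "f 0"] by (simp add: add.commute)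
          moreover have "cmod (D * complex_of_real x) = cmod D * x" using x0 by (simp add: norm_mult)
          ultimately show "1 \<le> cmod (f x)" by linarith
        qed
      qed simp
    qed
    have F0: "f 0 = 0"
    proof (rule ccontr)
      assume "f 0 \<noteq> 0"
      moreover have "\<forall>x\<ge>0. cmod (f 0) \<le> cmod (f x)"
      proof (intro allI impI)
        fix x :: real assume "x \<ge> 0"
        from lin[OF this] D0 have "f x = f 0" by simp
        then show "cmod (f 0) \<le> cmod (f x)" by simp
      qed
      ultimately show False using L2low[of 0 "cmod (f 0)"] by simp
    qed
    show "\<forall>x. f x = 0"
    proof
      fix x show "f x = 0"
        using fneg lin[of x] D0 F0 by (cases "x \<ge> 0") auto
    qed
  qed
  show "k > 0 \<Longrightarrow> (\<forall>x\<ge>0. f x = f 0 * complex_of_real (exp (- k * x))) \<and> f1 0 = - complex_of_real k * f 0"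
  proof -
    assume kp: "k > 0"
    define Em where "Em u = complex_of_real (exp (- k * u))" for u
    define Ep where "Ep u = complex_of_real (exp (k * u))" for u
    define U0 where "U0 = f1 0 + K * f 0"
    define W0 where "W0 = f1 0 - K * f 0"
    have EmEp: "Em u * Ep u = 1" for u by (simp add: Em_def Ep_def flip: of_real_mult exp_add)
    have UW: "(f1 u + K * f u) * Em u = U0 \<and> (f1 u - K * f u) * Ep u = W0" if u0: "u \<ge> 0" for u
    proof -
      note m = main[OF u0]
      have dU: "((\<lambda>v. (f1 v + K * f v) * Em v) has_vector_derivative 0) (at w within {0..u})"
        if w: "w \<in> {0..u}" for w
      proof -
        have a: "((\<lambda>v. f1 v + K * f v) has_vector_derivative K^2 * f w + K * f1 w) (at w within {0..u})"
          using m w by (intro has_vector_derivative_add has_vector_derivative_mult_right) auto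
        have b: "(Em has_vector_derivative (- (K * 1) * Em w)) (at w within {0..u})"
          using E_deriv[of 1 k w "{0..u}"] unfolding Em_def[abs_def] K_def by simp
        from has_vector_derivative_mult[OF a b] show ?thesis
          by (simp add: algebra_simps power2_eq_square)
      qed
      have dW: "((\<lambda>v. (f1 v - K * f v) * Ep v) has_vector_derivative 0) (at w within {0..u})"
        if w: "w \<in> {0..u}" for w
      proof -
        have a: "((\<lambda>v. f1 v - K * f v) has_vector_derivative K^2 * f w - K * f1 w) (at w within {0..u})"
          using m w by (intro has_vector_derivative_diff has_vector_derivative_mult_right) auto
        have b: "(Ep has_vector_derivative (K * Ep w)) (at w within {0..u})"
          using Ep_deriv[of k w "{0..u}"] unfolding Ep_def[abs_def] K_def by simp
        from has_vector_derivative_mult[OF a b] show ?thesis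
          by (simp add: algebra_simps power2_eq_square)
      qed
      have "(f1 u + K * f u) * Em u = (f1 0 + K * f 0) * Em 0"
        using u0 dU by (intro zero_deriv_const[of 0 u]) auto
      moreover have "(f1 u - K * f u) * Ep u = (f1 0 - K * f 0) * Ep 0"
        using u0 dW by (intro zero_deriv_const[of 0 u]) auto
      ultimately show ?thesis by (simp add: U0_def W0_def Em_def Ep_def)
    qed
    have fform: "2 * K * f u = U0 * Ep u - W0 * Em u" if u0: "u \<ge> 0" for u
    proof -
      have e1: "f1 u + K * f u = U0 * Ep u"
        using UW[OF u0] EmEp[of u] by (metis mult.assoc mult.commute mult_1_right)
      have e2: "f1 u - K * f u = W0 * Em u"
        using UW[OF u0] EmEp[of u] by (metis mult.assoc mult.commute mult_1_right)
      have "2 * K * f u = (f1 u + K * f u) - (f1 u - K * f u)" by (simp add: algebra_simps)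
      also have "\<dots> = U0 * Ep u - W0 * Em u" by (simp only: e1 e2)
      finally show ?thesis .
    qed
    have U00: "U0 = 0"
    proof (rule ccontr)
      assume Un: "U0 \<noteq> 0"
      define X where "X = cmod W0 / (k * cmod U0)"
      show False
      proof (rule L2low[of X "cmod U0 / (2*k)"])
        show "X \<ge> 0" using kp by (simp add: X_def)
        show "cmod U0 / (2*k) > 0" using Un kp by simp
        show "\<forall>x\<ge>X. cmod U0 / (2*k) \<le> cmod (f x)"
        proof (intro allI impI)
          fix x assume xX: "X \<le> x"
          then have x0: "x \<ge> 0" using \<open>X \<ge> 0\<close> by linarith
          have kx: "k * x * cmod U0 \<ge> cmod W0" using xX kp Un by (simp add: X_def field_simps)
          have "exp (k*x) \<ge> 1 + k*x" by simp
          then have "cmod U0 * exp (k*x) \<ge> cmod U0 * (1 + k*x)" by (simp add: mult_left_mono)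
          moreover have "exp (-k*x) \<le> 1" using kp x0 by simp
          then have "cmod W0 * exp (-k*x) \<le> cmod W0" by (simp add: mult_left_le)
          moreover have "cmod (U0 * Ep x) - cmod (W0 * Em x) \<le> cmod (U0 * Ep x - W0 * Em x)"
            by (rule norm_triangle_ineq2)
          moreover have "cmod (U0 * Ep x) = cmod U0 * exp (k*x)" by (simp add: Ep_def norm_mult)
          moreover have "cmod (W0 * Em x) = cmod W0 * exp (-k*x)" by (simp add: Em_def norm_mult)
          moreover have "cmod (U0 * Ep x - W0 * Em x) = 2 * k * cmod (f x)"
          proof -
            have "cmod (U0 * Ep x - W0 * Em x) = cmod (2 * K * f x)" by (simp only: fform[OF x0])
            then show ?thesis using kp by (simp add: K_def norm_mult)
          qed
          moreover have "cmod U0 * (1 + k*x) = cmod U0 + k * x * cmod U0" by (simp add: algebra_simps)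
          ultimately have "cmod U0 \<le> 2 * k * cmod (f x)" using kx by linarith
          then show "cmod U0 / (2*k) \<le> cmod (f x)" using kp by (simp add: field_simps)
        qed
      qed
    qed
    have fu: "f u = f 0 * Em u" if u0: "u \<ge> 0" for u
    proof -
      have "2 * K * f u = - W0 * Em u" using fform[OF u0] U00 by simp
      moreover have "2 * K * f 0 = - W0" using fform[of 0] U00 by (simp add: Em_def)
      ultimately have "2 * K * f u = 2 * K * f 0 * Em u" by simp
      then show ?thesis using kp by (simp add: K_def)
    qed
    have A: "\<forall>x\<ge>0. f x = f 0 * complex_of_real (exp (- k * x))"
    proof (intro allI impI)
      fix x :: real assume "x \<ge> 0"
      from fu[OF this] show "f x = f 0 * complex_of_real (exp (- k * x))" by (simp add: Em_def)
    qed
    have B: "f1 0 = - complex_of_real k * f 0"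
      using U00 unfolding U0_def K_def by (simp add: eq_neg_iff_add_eq_0)
    show ?thesis using A B by blast
  qed
qed

interpretation gs: vector_space gscale
  by unfold_locales (auto simp: gscale_def fun_eq_iff algebra_simps)

lemma cdim_one:
  assumes "\<psi>0 \<in> S" "\<psi>0 \<noteq> 0" "\<forall>\<psi>\<in>S. \<exists>\<alpha>. \<psi> = gscale \<alpha> \<psi>0"
  shows "cdim S = 1"
  unfolding cdim_def
proof (rule gs.dim_unique[of "{\<psi>0}"])
  show "{\<psi>0} \<subseteq> S" using assms by auto
  show "S \<subseteq> gs.span {\<psi>0}" using assms(3) by (auto simp: gs.span_singleton)
  show "gs.independent {\<psi>0}" using assms(2) by (simp add: gs.independent_insert gs.independent_empty)
qed simp

lemma eig_zero:
  assumes "\<psi> \<in> eigenspace_negLap A B (- (0^2))"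
  shows "\<psi> = (\<lambda>e x. 0)"
proof -
  obtain d1 d2 where H: "\<forall>e. H2_half (\<psi> e) (d1 e) (d2 e)"
    and ae: "\<forall>e. AE x in lebesgue. 0 \<le> x \<longrightarrow> - d2 e x = complex_of_real (- (0^2)) * \<psi> e x"
    using assms unfolding eigenspace_negLap_def by blast
  have "\<forall>x. \<psi> e x = 0" for e
    using edge_ode(1)[OF H[rule_format, of e] ae[rule_format, of e]] by simp
  then show ?thesis by (simp add: fun_eq_iff)
qed

lemma eig_char:
  assumes "\<psi> \<in> eigenspace_negLap A B (- (k^2))" and kp: "k > 0"
  shows "\<psi> = (\<lambda>e x. if 0 \<le> x then (\<chi> e. \<psi> e 0)$e * complex_of_real (exp (-k*x)) else 0)"
    and "A *v (\<chi> e. \<psi> e 0) = complex_of_real k *s (B *v (\<chi> e. \<psi> e 0))"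
proof -
  obtain d1 d2 where H: "\<forall>e. H2_half (\<psi> e) (d1 e) (d2 e)"
    and bc: "A *v (\<chi> e. \<psi> e 0) + B *v (\<chi> e. d1 e 0) = 0"
    and ae: "\<forall>e. AE x in lebesgue. 0 \<le> x \<longrightarrow> - d2 e x = complex_of_real (- (k^2)) * \<psi> e x"
    using assms unfolding eigenspace_negLap_def by blast
  note E = edge_ode(2)[OF H[rule_format] ae[rule_format] less_imp_le[OF kp] kp]
  have neg: "\<psi> e x = 0" if "x < 0" for e x
    using H[rule_format, of e] that unfolding H2_half_def by blast
  show "\<psi> = (\<lambda>e x. if 0 \<le> x then (\<chi> e. \<psi> e 0)$e * complex_of_real (exp (-k*x)) else 0)"
  proof (intro ext)
    fix e x
    show "\<psi> e x = (if 0 \<le> x then (\<chi> e. \<psi> e 0)$e * complex_of_real (exp (-k*x)) else 0)"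
    proof (cases "0 \<le> x")
      case True
      from E[of e] True have "\<psi> e x = \<psi> e 0 * complex_of_real (exp (- k * x))" by blast
      then show ?thesis using True by simp
    next
      case False then show ?thesis using neg by simp
    qed
  qed
  have d10: "d1 e 0 = - complex_of_real k * \<psi> e 0" for e using E[of e] by blast
  have dv: "(\<chi> e. d1 e 0) = (- complex_of_real k) *s (\<chi> e. \<psi> e 0)"
    by (simp add: vec_eq_iff d10)
  have "A *v (\<chi> e. \<psi> e 0) + B *v ((- complex_of_real k) *s (\<chi> e. \<psi> e 0)) = 0"
    using bc by (simp only: dv)
  then have "A *v (\<chi> e. \<psi> e 0) + (- complex_of_real k) *s (B *v (\<chi> e. \<psi> e 0)) = 0"
    by (simp only: mv_smult)
  then have "A *v (\<chi> e. \<psi> e 0) = - ((- complex_of_real k) *s (B *v (\<chi> e. \<psi> e 0)))"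
    by (rule eq_neg_iff_add_eq_0[THEN iffD2])
  then show "A *v (\<chi> e. \<psi> e 0) = complex_of_real k *s (B *v (\<chi> e. \<psi> e 0))"
    by (simp add: vector_smult_lneg)
qed

theorem proposition6p4:
  fixes A B :: "complex^'e::finite^'e" and lam :: real
  assumes "max_isotropic_data A B"
    and "strictly_positive A B"
    and "is_eigenvalue_negLap A B lam"
    and "lam \<le> 0"
    and "\<forall>\<mu>. is_eigenvalue_negLap A B \<mu> \<longrightarrow> lam \<le> \<mu>"
  shows "cdim (eigenspace_negLap A B lam) = 1"
proof -
  have herm: "A ** cmat_adj B = B ** cmat_adj A"
    using assms(1) unfolding max_isotropic_data_def by (metis adj_mult adj_adj)
  define k where "k = sqrt (- lam)"
  have k0: "k \<ge> 0" using assms(4) by (simp add: k_def)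
  have lamk: "lam = - (k^2)" using assms(4) by (simp add: k_def)
  obtain \<psi>0 where p0: "\<psi>0 \<in> eigenspace_negLap A B lam" and p0n: "\<psi>0 \<noteq> (\<lambda>e x. 0)"
    using assms(3) unfolding is_eigenvalue_negLap_def by blast
  have kp: "k > 0"
  proof (rule ccontr)
    assume "\<not> k > 0"
    then have "k = 0" using k0 by simp
    then have "\<psi>0 = (\<lambda>e x. 0)" using eig_zero[of \<psi>0 A B] p0 lamk by simp
    with p0n show False by simp
  qed
  have noev: "\<forall>t c. t > k \<longrightarrow> A *v c = complex_of_real t *s (B *v c) \<longrightarrow> c = 0"
  proof (intro allI impI)
    fix t c assume tk: "t > k" and ker: "A *v c = complex_of_real t *s (B *v c)"
    show "c = 0"
    proof (rule ccontr)
      assume "c \<noteq> 0"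
      then have "is_eigenvalue_negLap A B (- (t^2))" using construct_eigen[OF _ ker] tk kp by simp
      then have "lam \<le> - (t^2)" using assms(5) by blast
      moreover have "k^2 < t^2" using tk kp by (simp add: power_strict_mono)
      ultimately show False using lamk by simp
    qed
  qed
  have p0': "\<psi>0 \<in> eigenspace_negLap A B (- (k^2))" using p0 lamk by simp
  define c0 where "c0 = (\<chi> e. \<psi>0 e 0)"
  note C0 = eig_char[OF p0' kp]
  note C0' = C0(1)[folded c0_def]
  have c0n: "c0 \<noteq> 0"
  proof
    assume "c0 = 0"
    then have "\<psi>0 = (\<lambda>e x. 0)" using C0' by (simp add: fun_eq_iff)
    with p0n show False by simp
  qed
  show ?thesis
  proof (rule cdim_one[OF p0])
    show "\<psi>0 \<noteq> 0" using p0n by (simp add: zero_fun_def)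
    show "\<forall>\<psi>\<in>eigenspace_negLap A B lam. \<exists>\<alpha>. \<psi> = gscale \<alpha> \<psi>0"
    proof
      fix \<psi> assume "\<psi> \<in> eigenspace_negLap A B lam"
      then have p: "\<psi> \<in> eigenspace_negLap A B (- (k^2))" using lamk by simp
      note C = eig_char[OF p kp]
      define cp where "cp = (\<chi> e. \<psi> e 0)"
      note C' = C(1)[folded cp_def]
      obtain \<alpha> where al: "cp = \<alpha> *s c0"
        using LA[OF herm assms(2) kp noev c0n C0(2)[folded c0_def] C(2)[folded cp_def]] by blast
      have "\<psi> = gscale \<alpha> \<psi>0"
      proof -
        have "\<psi> = (\<lambda>e x. if 0 \<le> x then (\<alpha> *s c0)$e * complex_of_real (exp (-k*x)) else 0)"
          by (subst C') (simp only: al)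
        also have "\<dots> = gscale \<alpha> \<psi>0"
          using C0' by (simp add: gscale_def fun_eq_iff)
        finally show ?thesis .
      qed
      then show "\<exists>\<alpha>. \<psi> = gscale \<alpha> \<psi>0" by blast
    qed
  qed
qed

end
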